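(* Let $X$ and $Y$ be metric spaces with finite upper box dimensions, with metrics $d_X$ and $d_Y$, and let $\phi\colon X \to Y$ be any function. Set $s = \overline{\dim}_\mathrm{B} X + \overline{\dim}_\mathrm{B} Y + 2$. Then there exists a countable dense subset $Q = \{q_1, q_2, \dots\}$ of $X$ (with this enumeration) such that for every $x \in X$ there exists a sequence $(q_{n_k})_{k}$ of points of $Q$ with $\phi(q_{n_k}) \to \phi(x)$ as $k \to \infty$, $q_{n_k} \to x$ as $k\to\infty$, and $d_X(q_{n_k}, x) \le n_k^{-1/s}$ for all $k$.
   Context: The upper box dimension $\overline{\dim}_\mathrm{B} X$ of a metric space $X$ is the infimum of those $t$ such that for every $r>0$ there is a cover of $X$ by at most $r^{-t}$ balls of radius $r$ centred in $X$. *)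

theory Defs
  imports "HOL-Analysis.Analysis"
begin

text \<open>Valued in the extended reals (Inf of the empty set = infinity).\<close>

definition upper_box_dim :: "'a::metric_space set \<Rightarrow> ereal" where
  "upper_box_dim X = Inf (ereal ` {t::real. \<exists>r0>0. \<forall>r. 0 < r \<and> r < r0 \<longrightarrow>
      (\<exists>C. C \<subseteq> X \<and> finite C \<and> real (card C) \<le> r powr (-t) \<and> X \<subseteq> (\<Union>c\<in>C. ball c r))})"

end

theory Submission imports Defs "HOL-Library.Discrete_Functions" begin

lemma T_nonneg:
  fixes X :: "'a::metric_space set"
  assumes "X \<noteq> {}" "r0 > 0"
    and H: "\<forall>r. 0 < r \<and> r < r0 \<longrightarrow>
      (\<exists>C. C \<subseteq> X \<and> finite C \<and> real (card C) \<le> r powr (-t) \<and> X \<subseteq> (\<Union>c\<in>C. ball c r))"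
  shows "t \<ge> 0"
proof (rule ccontr)
  assume "\<not> t \<ge> 0"
  define r where "r = min (r0/2) (1/2)"
  have r: "0 < r" "r < r0" "r < 1" using assms by (auto simp: r_def)
  have "\<exists>C. C \<subseteq> X \<and> finite C \<and> real (card C) \<le> r powr (-t) \<and> X \<subseteq> (\<Union>c\<in>C. ball c r)"
    using H r(1,2) by simp
  then obtain C where C: "C \<subseteq> X" "finite C" "real (card C) \<le> r powr (-t)" "X \<subseteq> (\<Union>c\<in>C. ball c r)"
    by blast
  have "C \<noteq> {}" using C(4) assms(1) by blast
  hence "card C \<ge> 1" using C(2) by (simp add: Suc_le_eq card_gt_0_iff)
  moreover have "r powr (-t) < 1" using r \<open>\<not> t \<ge> 0\<close>
    using powr_less_mono2[of "-t" r 1] by simp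
  ultimately show False using C(3) by linarith
qed

lemma dim_props:
  fixes X :: "'a::metric_space set"
  assumes "X \<noteq> {}" "\<bar>upper_box_dim X\<bar> \<noteq> \<infinity>"
  shows "\<exists>a r0. 0 \<le> a \<and> a < real_of_ereal (upper_box_dim X) + 1/2 \<and> 0 < r0 \<and>
     (\<forall>r. 0 < r \<and> r < r0 \<longrightarrow>
      (\<exists>C. C \<subseteq> X \<and> finite C \<and> real (card C) \<le> r powr (-a) \<and> X \<subseteq> (\<Union>c\<in>C. ball c r)))"
proof -
  define T where "T = {t::real. \<exists>r0>0. \<forall>r. 0 < r \<and> r < r0 \<longrightarrow>
      (\<exists>C. C \<subseteq> X \<and> finite C \<and> real (card C) \<le> r powr (-t) \<and> X \<subseteq> (\<Union>c\<in>C. ball c r))}"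
  define D where "D = upper_box_dim X"
  have DT: "D = Inf (ereal ` T)" unfolding D_def T_def upper_box_dim_def by (rule refl)
  have De: "D = ereal (real_of_ereal D)" using assms(2) D_def by (cases D) auto
  have "D < ereal (real_of_ereal D + 1/2)" by (subst De) simp
  hence "\<exists>y\<in>ereal ` T. y < ereal (real_of_ereal D + 1/2)" unfolding DT Inf_less_iff .
  then obtain a where a: "a \<in> T" "ereal a < ereal (real_of_ereal D + 1/2)" by auto
  from a(1) have "\<exists>r0>0. \<forall>r. 0 < r \<and> r < r0 \<longrightarrow>
      (\<exists>C. C \<subseteq> X \<and> finite C \<and> real (card C) \<le> r powr (-a) \<and> X \<subseteq> (\<Union>c\<in>C. ball c r))"
    unfolding T_def by (rule CollectD)
  then obtain r0 where r0: "r0 > 0" "\<forall>r. 0 < r \<and> r < r0 \<longrightarrow>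
      (\<exists>C. C \<subseteq> X \<and> finite C \<and> real (card C) \<le> r powr (-a) \<and> X \<subseteq> (\<Union>c\<in>C. ball c r))"
    by (elim exE conjE) (rule that)
  have "a \<ge> 0" by (rule T_nonneg[OF assms(1) r0])
  moreover have "a < real_of_ereal D + 1/2" using a(2) by simp
  ultimately show ?thesis using r0 unfolding D_def by (intro exI[of _ a] exI[of _ r0] conjI)
qed

lemma enum:
  fixes P :: "nat \<Rightarrow> 'a set"
  assumes fin: "\<And>m. finite (P m)" and card: "\<And>m. card (P m) \<le> 2^m"
    and sub: "\<And>m. P m \<subseteq> X" and x0: "x0 \<in> X"
  shows "\<exists>q::nat\<Rightarrow>'a. (\<forall>n. q n \<in> X) \<and> (\<forall>m. \<forall>p\<in>P m. \<exists>n::nat. 2^m \<le> n \<and> n < 2^(Suc m) \<and> q n = p)"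
proof -
  have "\<forall>m. \<exists>h. bij_betw h {0..<card (P m)} (P m)" using ex_bij_betw_nat_finite fin by blast
  then obtain h where h: "\<And>m. bij_betw (h m) {0..<card (P m)} (P m)" by metis
  define q where "q n = (let m = floor_log n; i = n - 2^m in if i < card (P m) then h m i else x0)" for n
  have "\<forall>n. q n \<in> X"
  proof
    fix n
    show "q n \<in> X" unfolding q_def Let_def using h[of "floor_log n"] sub x0
      by (auto simp: bij_betw_def) (metis atLeastLessThan_iff imageI le0 subsetD)
  qed
  moreover have "\<exists>n. 2^m \<le> n \<and> n < 2^(Suc m) \<and> q n = p" if "p \<in> P m" for m p
  proof -
    have "p \<in> h m ` {0..<card (P m)}" using h[of m] that by (simp add: bij_betw_def)
    then obtain i where i: "i < card (P m)" "h m i = p" by auto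
    have ilt: "i < 2^m" using i card[of m] by linarith
    have fl: "floor_log (2^m + i) = m"
      by (rule floor_log_eqI) (use ilt in simp_all)
    have "q (2^m + i) = p" using fl i by (simp add: q_def Let_def)
    moreover have "(2::nat)^m + i < 2^(Suc m)" using ilt by simp
    ultimately show ?thesis by (intro exI[of _ "2^m + i"]) simp
  qed
  ultimately show ?thesis by (intro exI[of _ q] conjI allI ballI) simp_all
qed


lemma net:
  fixes X :: "'a::metric_space set" and Y :: "'b::metric_space set" and phi :: "'a \<Rightarrow> 'b"
  assumes "CX \<subseteq> X" "finite CX" "X \<subseteq> (\<Union>c\<in>CX. ball c \<rho>)"
    "finite CY" "Y \<subseteq> (\<Union>c\<in>CY. ball c \<rho>)" "phi ` X \<subseteq> Y"
  shows "\<exists>P. P \<subseteq> X \<and> finite P \<and> card P \<le> card CX * card CY \<and>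
     (\<forall>x\<in>X. \<exists>p\<in>P. dist p x < 2*\<rho> \<and> dist (phi p) (phi x) < 2*\<rho>)"
proof -
  define S where "S = {ce \<in> CX \<times> CY. \<exists>x\<in>X. dist (fst ce) x < \<rho> \<and> dist (snd ce) (phi x) < \<rho>}"
  define f where "f ce = (SOME x. x\<in>X \<and> dist (fst ce) x < \<rho> \<and> dist (snd ce) (phi x) < \<rho>)" for ce
  have fS: "f ce \<in> X \<and> dist (fst ce) (f ce) < \<rho> \<and> dist (snd ce) (phi (f ce)) < \<rho>" if "ce \<in> S" for ce
  proof -
    from that obtain x where "x\<in>X \<and> dist (fst ce) x < \<rho> \<and> dist (snd ce) (phi x) < \<rho>"
      unfolding S_def by auto
    thus ?thesis unfolding f_def by (rule someI)
  qed
  have finS: "finite S" unfolding S_def using assms(2,4) by simp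
  have "f ` S \<subseteq> X" using fS by auto
  moreover have "finite (f ` S)" using finS by simp
  moreover have "card (f ` S) \<le> card CX * card CY"
  proof -
    have "card (f ` S) \<le> card S" using finS by (rule card_image_le)
    also have "\<dots> \<le> card (CX \<times> CY)"
      by (rule card_mono) (use assms(2,4) in \<open>auto simp: S_def\<close>)
    finally show ?thesis by (simp add: card_cartesian_product)
  qed
  moreover have "\<exists>p\<in>f ` S. dist p x < 2*\<rho> \<and> dist (phi p) (phi x) < 2*\<rho>" if x: "x \<in> X" for x
  proof -
    obtain c where c: "c \<in> CX" "dist c x < \<rho>" using assms(3) x by auto
    have "phi x \<in> Y" using assms(6) x by auto
    then obtain e where e: "e \<in> CY" "dist e (phi x) < \<rho>" using assms(5) by auto
    have ceS: "(c,e) \<in> S" unfolding S_def using c e x by auto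
    from fS[OF ceS] have h: "dist c (f (c,e)) < \<rho>" "dist e (phi (f (c,e))) < \<rho>" by auto
    have "dist (f (c,e)) x \<le> dist c (f (c,e)) + dist c x" by (rule dist_triangle3)
    moreover have "dist (phi (f (c,e))) (phi x) \<le> dist e (phi (f (c,e))) + dist e (phi x)" by (rule dist_triangle3)
    ultimately show ?thesis using ceS h c e by (intro bexI[of _ "f (c,e)"]) auto
  qed
  ultimately show ?thesis by (intro exI[of _ "f ` S"]) blast
qed


theorem lemma3p1:
  fixes X :: "'a::metric_space set" and Y :: "'b::metric_space set"
    and phi :: "'a \<Rightarrow> 'b"
  assumes "X \<noteq> {}" and "Y \<noteq> {}"
    and "\<bar>upper_box_dim X\<bar> \<noteq> \<infinity>" and "\<bar>upper_box_dim Y\<bar> \<noteq> \<infinity>"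
    and "phi ` X \<subseteq> Y"
    and "s = real_of_ereal (upper_box_dim X) + real_of_ereal (upper_box_dim Y) + 2"
  shows "\<exists>q :: nat \<Rightarrow> 'a. q ` {1..} \<subseteq> X \<and> X \<subseteq> closure (q ` {1..}) \<and>
           (\<forall>x\<in>X. \<exists>n :: nat \<Rightarrow> nat. (\<forall>k. 1 \<le> n k) \<and>
              ((\<lambda>k. phi (q (n k))) \<longlonglongrightarrow> phi x) \<and>
              ((\<lambda>k. q (n k)) \<longlonglongrightarrow> x) \<and>
              (\<forall>k. dist (q (n k)) x \<le> real (n k) powr (-1 / s)))"
proof -
  obtain a r1 where a: "0 \<le> a" "a < real_of_ereal (upper_box_dim X) + 1/2" "0 < r1"
    and HX: "\<forall>r. 0 < r \<and> r < r1 \<longrightarrow>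
      (\<exists>C. C \<subseteq> X \<and> finite C \<and> real (card C) \<le> r powr (-a) \<and> X \<subseteq> (\<Union>c\<in>C. ball c r))"
    using dim_props[OF assms(1,3)] by (elim exE conjE) (rule that)
  obtain b r2 where b: "0 \<le> b" "b < real_of_ereal (upper_box_dim Y) + 1/2" "0 < r2"
    and HY: "\<forall>r. 0 < r \<and> r < r2 \<longrightarrow>
      (\<exists>C. C \<subseteq> Y \<and> finite C \<and> real (card C) \<le> r powr (-b) \<and> Y \<subseteq> (\<Union>c\<in>C. ball c r))"
    using dim_props[OF assms(2,4)] by (elim exE conjE) (rule that)
  define u where "u = a + b"
  have u0: "0 \<le> u" using a b by (simp add: u_def)
  have su: "u + 1 < s" using a b assms(6) by (simp add: u_def)
  have s0: "0 < s" using su u0 by linarith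
  define e where "e = 1/(u+1) - 1/s"
  have e0: "0 < e" unfolding e_def using su u0 by (simp add: frac_less2)
  define \<rho> where "\<rho> m = 2 powr (- real m / (u+1))" for m :: nat
  define c where "c = (2::real) powr (-1/(u+1))"
  have c: "0 < c" "c < 1" unfolding c_def using u0 by (auto intro!: powr_less_one)
  have \<rho>c: "\<rho> m = c ^ m" for m
  proof -
    have "c ^ m = c powr real m" using c by (simp add: powr_realpow)
    also have "\<dots> = 2 powr (-1/(u+1) * real m)" unfolding c_def by (simp add: powr_powr)
    finally show ?thesis unfolding \<rho>_def by simp
  qed
  have \<rho>pos: "0 < \<rho> m" for m unfolding \<rho>_def by simp
  have \<rho>lim: "\<rho> \<longlonglongrightarrow> 0" unfolding \<rho>c[abs_def] using c by (intro LIMSEQ_power_zero) simp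
  have ev1: "eventually (\<lambda>m. \<rho> m < min r1 r2) sequentially"
  proof -
    have "0 < min r1 r2" using a(3) b(3) by simp
    from order_tendstoD(2)[OF \<rho>lim this] show ?thesis .
  qed
  obtain N :: nat where N: "(1 + 1/s)/e \<le> real N" using real_arch_simple by blast
  have ev2: "eventually (\<lambda>m. 1 + 1/s \<le> real m * e) sequentially"
  proof (rule eventually_sequentiallyI[of N])
    fix m assume "N \<le> m"
    hence "(1 + 1/s)/e \<le> real m" using N by linarith
    thus "1 + 1/s \<le> real m * e" using e0 by (simp add: pos_divide_le_eq)
  qed
  obtain m0 where m0: "\<And>m. m0 \<le> m \<Longrightarrow> \<rho> m < min r1 r2 \<and> 1 + 1/s \<le> real m * e"
    using eventually_conj[OF ev1 ev2] unfolding eventually_sequentially by blast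
  have K1: "\<rho> m powr (-a) * \<rho> m powr (-b) \<le> 2^m" for m
  proof -
    have "\<rho> m powr (-a) * \<rho> m powr (-b) = \<rho> m powr (-u)"
      by (simp add: u_def powr_add[symmetric])
    also have "\<dots> = 2 powr (real m * (u/(u+1)))" unfolding \<rho>_def by (simp add: powr_powr)
    also have "\<dots> \<le> 2 powr (real m)"
    proof (rule powr_mono)
      have "u/(u+1) \<le> 1" using u0 by simp
      thus "real m * (u/(u+1)) \<le> real m" by (rule mult_left_le) simp
    qed simp
    also have "\<dots> = 2^m" by (simp add: powr_realpow)
    finally show ?thesis .
  qed
  have K2: "2 * \<rho> m \<le> real n powr (-1/s)"
    if "m0 \<le> m" "2^m \<le> n" "n < 2^(Suc m)" for m n :: nat
  proof -
    have me: "1 + 1/s \<le> real m * e" using m0[OF that(1)] by simp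
    have n0: "0 < real n" using that(2) by (simp add: order_less_le_trans[of 0 "2^m"])
    have "real n < real (2 ^ Suc m)" using that(3) by (simp only: of_nat_less_iff)
    hence "real n \<le> 2 ^ Suc m" by simp
    hence "(2 ^ Suc m) powr (-1/s) \<le> real n powr (-1/s)"
      using s0 n0 by (intro powr_mono2') simp_all
    moreover have "(2 ^ Suc m :: real) powr (-1/s) = 2 powr (-((real m + 1)/s))"
    proof -
      have "(2 ^ Suc m :: real) = 2 powr (real m + 1)" by (simp add: powr_realpow[symmetric] powr_add)
      thus ?thesis by (simp add: powr_powr)
    qed
    moreover have "2 * \<rho> m = 2 powr (1 - real m/(u+1))"
      unfolding \<rho>_def by (simp add: powr_diff powr_minus divide_inverse)
    moreover have "2 powr (1 - real m/(u+1)) \<le> 2 powr (-((real m + 1)/s))"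
    proof (rule powr_mono)
      have "-((real m + 1)/s) - (1 - real m/(u+1)) = real m * e - (1 + 1/s)"
      proof -
        have h1: "real m/(u+1) = real m * (1/(u+1))" by simp
        have h2: "(real m+1)/s = real m*(1/s) + 1/s" by (simp add: add_divide_distrib)
        have h3: "real m * e = real m * (1/(u+1)) - real m * (1/s)" by (simp add: e_def right_diff_distrib)
        show ?thesis unfolding h1 h2 h3 by simp
      qed
      thus "1 - real m/(u+1) \<le> -((real m + 1)/s)" using me by linarith
    qed simp
    ultimately show ?thesis by linarith
  qed
  from HX[unfolded choice_iff'] obtain CX where CX: "\<forall>r. 0 < r \<and> r < r1 \<longrightarrow> CX r \<subseteq> X \<and> finite (CX r) \<and>
      real (card (CX r)) \<le> r powr (-a) \<and> X \<subseteq> (\<Union>c\<in>CX r. ball c r)" ..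
  from HY[unfolded choice_iff'] obtain CY where CY: "\<forall>r. 0 < r \<and> r < r2 \<longrightarrow> CY r \<subseteq> Y \<and> finite (CY r) \<and>
      real (card (CY r)) \<le> r powr (-b) \<and> Y \<subseteq> (\<Union>c\<in>CY r. ball c r)" ..
  have Pex: "\<exists>P. P \<subseteq> X \<and> finite P \<and> card P \<le> 2^m \<and>
     (m0 \<le> m \<longrightarrow> (\<forall>x\<in>X. \<exists>p\<in>P. dist p x < 2*\<rho> m \<and> dist (phi p) (phi x) < 2*\<rho> m))" for m
  proof (cases "m0 \<le> m")
    case False
    thus ?thesis by (intro exI[of _ "{}"]) simp
  next
    case True
    have r: "\<rho> m < r1" "\<rho> m < r2" using m0[OF True] by auto
    note cx = CX[rule_format, OF conjI[OF \<rho>pos r(1)]] and cy = CY[rule_format, OF conjI[OF \<rho>pos r(2)]]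
    have "\<exists>P. P \<subseteq> X \<and> finite P \<and> card P \<le> card (CX (\<rho> m)) * card (CY (\<rho> m)) \<and>
     (\<forall>x\<in>X. \<exists>p\<in>P. dist p x < 2*\<rho> m \<and> dist (phi p) (phi x) < 2*\<rho> m)"
      by (rule net) (use cx cy assms(5) in auto)
    then obtain P where P: "P \<subseteq> X" "finite P" "card P \<le> card (CX (\<rho> m)) * card (CY (\<rho> m))"
      "\<forall>x\<in>X. \<exists>p\<in>P. dist p x < 2*\<rho> m \<and> dist (phi p) (phi x) < 2*\<rho> m"
      by blast
    have "real (card P) \<le> real (card (CX (\<rho> m))) * real (card (CY (\<rho> m)))"
      using P(3) by (simp only: of_nat_mult[symmetric] of_nat_le_iff)
    also have "\<dots> \<le> \<rho> m powr (-a) * \<rho> m powr (-b)"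
      using cx cy by (intro mult_mono) auto
    also have "\<dots> \<le> 2^m" by (rule K1)
    also have "(2::real)^m = real (2^m)" by simp
    finally have "card P \<le> 2^m" by (simp only: of_nat_le_iff)
    thus ?thesis using P by (intro exI[of _ P]) auto
  qed
  from choice[OF allI[OF Pex]] obtain P where PP: "\<forall>m. P m \<subseteq> X \<and> finite (P m) \<and> card (P m) \<le> 2^m \<and>
     (m0 \<le> m \<longrightarrow> (\<forall>x\<in>X. \<exists>p\<in>P m. dist p x < 2*\<rho> m \<and> dist (phi p) (phi x) < 2*\<rho> m))" ..
  have P: "\<And>m. P m \<subseteq> X" "\<And>m. finite (P m)" "\<And>m. card (P m) \<le> 2^m"
    "\<And>m. m0 \<le> m \<Longrightarrow> (\<forall>x\<in>X. \<exists>p\<in>P m. dist p x < 2*\<rho> m \<and> dist (phi p) (phi x) < 2*\<rho> m)"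
    using PP by simp_all
  obtain x0 where x0: "x0 \<in> X" using assms(1) by blast
  obtain q :: "nat \<Rightarrow> 'a" where q: "\<And>n. q n \<in> X"
    "\<And>m p. p \<in> P m \<Longrightarrow> \<exists>n::nat. 2^m \<le> n \<and> n < 2^(Suc m) \<and> q n = p"
    using enum[OF P(2) P(3) P(1) x0] by blast
  have main: "\<exists>nn :: nat \<Rightarrow> nat. (\<forall>k. 1 \<le> nn k) \<and>
              ((\<lambda>k. phi (q (nn k))) \<longlonglongrightarrow> phi x) \<and>
              ((\<lambda>k. q (nn k)) \<longlonglongrightarrow> x) \<and>
              (\<forall>k. dist (q (nn k)) x \<le> real (nn k) powr (-1 / s))" if x: "x \<in> X" for x
  proof -
    have nex: "\<exists>n. 1 \<le> n \<and> dist (q n) x < 2 * \<rho> (k + m0) \<and> dist (phi (q n)) (phi x) < 2 * \<rho> (k + m0)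
            \<and> dist (q n) x \<le> real n powr (-1/s)" for k
    proof -
      have km: "m0 \<le> k + m0" by simp
      from bspec[OF P(4)[OF km] x] obtain p where p: "p \<in> P (k+m0)" "dist p x < 2*\<rho> (k+m0)" "dist (phi p) (phi x) < 2*\<rho> (k+m0)"
        by blast
      obtain n where n: "2^(k+m0) \<le> n" "n < 2^(Suc (k+m0))" "q n = p" using q(2)[OF p(1)] by (elim exE conjE) (rule that)
      have "(1::nat) \<le> 2^(k+m0)" by simp
      hence "1 \<le> n" using n(1) by (rule le_trans)
      moreover have "2 * \<rho> (k+m0) \<le> real n powr (-1/s)" by (rule K2[OF km n(1) n(2)])
      moreover have d1: "dist (q n) x < 2 * \<rho> (k + m0)" using p(2) n(3) by simp
      moreover have "dist (phi (q n)) (phi x) < 2 * \<rho> (k + m0)" using p(3) n(3) by simp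
      moreover have "dist (q n) x \<le> real n powr (-1/s)" using d1 calculation(2) by linarith
      ultimately show ?thesis by (intro exI[of _ n] conjI)
    qed
    from choice[OF allI[OF nex]] obtain nn where NN: "\<forall>k. 1 \<le> nn k \<and> dist (q (nn k)) x < 2 * \<rho> (k + m0) \<and> dist (phi (q (nn k))) (phi x) < 2 * \<rho> (k + m0)
            \<and> dist (q (nn k)) x \<le> real (nn k) powr (-1/s)" ..
    have nn: "\<And>k. 1 \<le> nn k" "\<And>k. dist (q (nn k)) x < 2 * \<rho> (k + m0)"
      "\<And>k. dist (phi (q (nn k))) (phi x) < 2 * \<rho> (k + m0)"
      "\<And>k. dist (q (nn k)) x \<le> real (nn k) powr (-1/s)" using NN by simp_all
    have lim2: "(\<lambda>k. 2 * \<rho> (k + m0)) \<longlonglongrightarrow> 0"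
      using tendsto_mult_right_zero[OF LIMSEQ_ignore_initial_segment[OF \<rho>lim, of m0], of 2] by simp
    have "\<forall>k. norm (dist (q (nn k)) x) \<le> 2 * \<rho> (k + m0)" using nn(2) by (simp add: less_imp_le)
    hence "(\<lambda>k. dist (q (nn k)) x) \<longlonglongrightarrow> 0"
      by (rule Lim_null_comparison[of "\<lambda>k. dist (q (nn k)) x" "\<lambda>k. 2 * \<rho> (k + m0)", OF always_eventually lim2])
    hence t1: "(\<lambda>k. q (nn k)) \<longlonglongrightarrow> x" by (rule tendsto_dist_iff[THEN iffD2])
    have "\<forall>k. norm (dist (phi (q (nn k))) (phi x)) \<le> 2 * \<rho> (k + m0)" using nn(3) by (simp add: less_imp_le)
    hence "(\<lambda>k. dist (phi (q (nn k))) (phi x)) \<longlonglongrightarrow> 0"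
      by (rule Lim_null_comparison[of "\<lambda>k. dist (phi (q (nn k))) (phi x)" "\<lambda>k. 2 * \<rho> (k + m0)", OF always_eventually lim2])
    hence t2: "(\<lambda>k. phi (q (nn k))) \<longlonglongrightarrow> phi x" by (rule tendsto_dist_iff[THEN iffD2])
    show ?thesis using nn(1) nn(4) t1 t2 by (intro exI[of _ nn] conjI allI)
  qed
  have qX: "q ` {1..} \<subseteq> X" using q(1) by auto
  have dense: "X \<subseteq> closure (q ` {1..})"
  proof
    fix x assume x: "x \<in> X"
    obtain nn :: "nat \<Rightarrow> nat" where nn: "\<forall>k. 1 \<le> nn k" "(\<lambda>k. q (nn k)) \<longlonglongrightarrow> x"
      using main[OF x] by blast
    show "x \<in> closure (q ` {1..})" unfolding closure_sequential
      by (rule exI[of _ "\<lambda>k. q (nn k)"]) (use nn in auto)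
  qed
  show ?thesis using qX dense main by (intro exI[of _ q] conjI) auto
qed

end
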